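(* Let $d\ge 2$, $D=\{1,\dots,d\}$, and let $\xi=(\xi_1,\dots,\xi_d)$ be a random vector with centered coordinates. Let $\phi\in\Phi$ be a Young–Orlicz function such that $\beta_i:=\|\xi_i\|_{B(\phi)}\in(0,\infty)$ for every $i\in D$. Suppose moreover that for every $i\in D$ there exists $\delta_i\in(0,\beta_i]$ with $$\mathbf P(\xi_i>u)\ge\exp\big(-\nu[\phi](u/\delta_i)\big)\quad\text{for all }u\ge 1.$$ Then for all $u\ge1$, $$\mathbf P\Big(\max_{i\in D}\xi_i>u\Big)\ \ge\ \sum_{i\in D}\exp\big(-\nu[\phi](u/\delta_i)\big)\ -\sum_{\substack{i,j\in D\\ i\neq j}}\exp\Big(-\nu[\phi]\Big(\frac{2u}{\beta_i+\beta_j}\Big)\Big),$$ where the double sum runs over ordered pairs $(i,j)$ with $i\ne j$.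
   Context: A Young–Orlicz function is a function $\phi:(-\lambda_0,\lambda_0)\to[0,\infty)$, for some $\lambda_0\in(0,\infty]$, which is even, strictly convex, twice continuously differentiable, positive for positive arguments, with $\phi(0)=0$, $\phi'(0)=0$, $\phi''(0)\in(0,\infty)$; $\Phi$ denotes the set of all such functions. For a centered random variable $\eta$, its $B(\phi)$-norm is $$\|\eta\|_{B(\phi)}:=\inf\{\tau\ge 0:\ \mathbf E\exp(\pm\lambda\eta)\le\exp(\phi(\lambda\tau))\ \text{for all real }\lambda\text{ with }|\lambda\tau|<\lambda_0\},$$ and $B(\phi)$ is the space of centered random variables with finite such norm. The Young–Fenchel (Legendre) transform of $\phi$ is $\nu[\phi](x):=\sup_{|\lambda|<\lambda_0}(\lambda x-\phi(\lambda))$. *)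

theory Defs
  imports "HOL-Analysis.Analysis" "HOL-Probability.Probability"
begin

definition yo_dom :: "ereal \<Rightarrow> real set" where
  "yo_dom l0 = {x. ereal \<bar>x\<bar> < l0}"

definition strictly_convex_on :: "real set \<Rightarrow> (real \<Rightarrow> real) \<Rightarrow> bool" where
  "strictly_convex_on S f \<longleftrightarrow>
     (\<forall>x\<in>S. \<forall>y\<in>S. x \<noteq> y \<longrightarrow> (\<forall>t::real. 0 < t \<and> t < 1 \<longrightarrow>
        f ((1 - t) * x + t * y) < (1 - t) * f x + t * f y))"

text \<open>The class Phi of Young-Orlicz functions (phi considered only on (-l0,l0)).\<close>
definition young_orlicz :: "(real \<Rightarrow> real) \<Rightarrow> ereal \<Rightarrow> bool" where
  "young_orlicz phi l0 \<longleftrightarrow>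
     0 < l0 \<and>
     (\<forall>x\<in>yo_dom l0. 0 \<le> phi x) \<and>
     (\<forall>x\<in>yo_dom l0. phi (- x) = phi x) \<and>
     strictly_convex_on (yo_dom l0) phi \<and>
     (\<forall>x\<in>yo_dom l0. phi differentiable (at x)) \<and>
     (\<forall>x\<in>yo_dom l0. (deriv phi) differentiable (at x)) \<and>
     continuous_on (yo_dom l0) (deriv (deriv phi)) \<and>
     (\<forall>x\<in>yo_dom l0. 0 < x \<longrightarrow> 0 < phi x) \<and>
     phi 0 = 0 \<and> deriv phi 0 = 0 \<and> 0 < deriv (deriv phi) 0"

text \<open>B(phi)-norm (infimum of the empty set is +infinity).\<close>
definition bphi_norm :: "'a measure \<Rightarrow> (real \<Rightarrow> real) \<Rightarrow> ereal \<Rightarrow> ('a \<Rightarrow> real) \<Rightarrow> ereal" where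
  "bphi_norm M phi l0 \<eta> =
     Inf (ereal ` {\<tau>::real. 0 \<le> \<tau> \<and>
        (\<forall>s::real. ereal \<bar>s * \<tau>\<bar> < l0 \<longrightarrow>
           (\<integral>\<^sup>+ x. ennreal (exp (s * \<eta> x)) \<partial>M) \<le> ennreal (exp (phi (s * \<tau>))) \<and>
           (\<integral>\<^sup>+ x. ennreal (exp (- s * \<eta> x)) \<partial>M) \<le> ennreal (exp (phi (s * \<tau>))))})"

definition young_fenchel :: "(real \<Rightarrow> real) \<Rightarrow> ereal \<Rightarrow> real \<Rightarrow> ereal" where
  "young_fenchel phi l0 x = (SUP s\<in>yo_dom l0. ereal (s * x - phi s))"

definition exp_neg :: "ereal \<Rightarrow> real" where
  "exp_neg v = (if v = \<infinity> then 0 else if v = - \<infinity> then 0 else exp (- real_of_ereal v))"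

end

theory Submission imports Defs begin

lemma yo_cont:
  assumes "young_orlicz phi l0" "x \<in> yo_dom l0" shows "isCont phi x"
  using assms unfolding young_orlicz_def
  by (meson differentiable_imp_continuous_within)

lemma norm_bound:
  assumes yo: "young_orlicz phi l0"
    and nb: "bphi_norm M phi l0 \<eta> = ereal \<beta>"
    and s: "ereal \<bar>s * \<beta>\<bar> < l0"
  shows "(\<integral>\<^sup>+ x. ennreal (exp (s * \<eta> x)) \<partial>M) \<le> ennreal (exp (phi (s * \<beta>)))"
proof -
  define S where "S = {\<tau>::real. 0 \<le> \<tau> \<and>
        (\<forall>s::real. ereal \<bar>s * \<tau>\<bar> < l0 \<longrightarrow>
           (\<integral>\<^sup>+ x. ennreal (exp (s * \<eta> x)) \<partial>M) \<le> ennreal (exp (phi (s * \<tau>))) \<and>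
           (\<integral>\<^sup>+ x. ennreal (exp (- s * \<eta> x)) \<partial>M) \<le> ennreal (exp (phi (s * \<tau>))))}"
  have inf: "Inf (ereal ` S) = ereal \<beta>" using nb unfolding bphi_norm_def S_def by simp
  have "\<forall>n. \<exists>\<tau>\<in>S. \<beta> \<le> \<tau> \<and> \<tau> < \<beta> + inverse (real (Suc n))"
  proof
    fix n
    have "Inf (ereal ` S) < ereal (\<beta> + inverse (real (Suc n)))" using inf by simp
    then obtain y where y: "y \<in> ereal ` S" "y < ereal (\<beta> + inverse (real (Suc n)))"
      unfolding Inf_less_iff by blast
    then obtain \<tau> where t: "\<tau> \<in> S" "y = ereal \<tau>" by auto
    have "ereal \<beta> \<le> ereal \<tau>" using t inf by (metis Inf_lower image_eqI)
    then show "\<exists>\<tau>\<in>S. \<beta> \<le> \<tau> \<and> \<tau> < \<beta> + inverse (real (Suc n))" using t y by auto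
  qed
  then obtain T where T: "\<And>n. T n \<in> S" "\<And>n. \<beta> \<le> T n" "\<And>n. T n < \<beta> + inverse (real (Suc n))"
    by metis
  have lim: "T \<longlonglongrightarrow> \<beta>"
  proof (rule tendsto_sandwich[of "\<lambda>n. \<beta>" _ _ "\<lambda>n. \<beta> + inverse (real (Suc n))"])
    show "\<forall>\<^sub>F n in sequentially. \<beta> \<le> T n" using T by simp
    show "\<forall>\<^sub>F n in sequentially. T n \<le> \<beta> + inverse (real (Suc n))" using T by (simp add: less_imp_le)
    show "(\<lambda>n. \<beta>) \<longlonglongrightarrow> \<beta>" by simp
    show "(\<lambda>n. \<beta> + inverse (real (Suc n))) \<longlonglongrightarrow> \<beta>"
      using tendsto_add[OF tendsto_const LIMSEQ_inverse_real_of_nat, of \<beta>] by simp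
  qed
  have l1: "(\<lambda>n. \<bar>s * T n\<bar>) \<longlonglongrightarrow> \<bar>s * \<beta>\<bar>"
    by (intro tendsto_intros lim)
  hence "(\<lambda>n. ereal \<bar>s * T n\<bar>) \<longlonglongrightarrow> ereal \<bar>s * \<beta>\<bar>" by (simp add: lim_ereal)
  hence ev: "\<forall>\<^sub>F n in sequentially. ereal \<bar>s * T n\<bar> < l0"
    using s by (rule order_tendstoD)
  have dom: "s * \<beta> \<in> yo_dom l0" using s by (simp add: yo_dom_def)
  have "(\<lambda>n. s * T n) \<longlonglongrightarrow> s * \<beta>" by (intro tendsto_intros lim)
  hence "(\<lambda>n. phi (s * T n)) \<longlonglongrightarrow> phi (s * \<beta>)"
    using yo_cont[OF yo dom] isCont_tendsto_compose by blast
  hence l2: "(\<lambda>n. ennreal (exp (phi (s * T n)))) \<longlonglongrightarrow> ennreal (exp (phi (s * \<beta>)))"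
    by (intro tendsto_ennrealI tendsto_intros)
  show ?thesis
  proof (rule tendsto_lowerbound[OF l2])
    show "\<forall>\<^sub>F n in sequentially. (\<integral>\<^sup>+ x. ennreal (exp (s * \<eta> x)) \<partial>M) \<le> ennreal (exp (phi (s * T n)))"
      using ev
    proof eventually_elim
      case (elim n)
      then show ?case using T(1)[of n] unfolding S_def by blast
    qed
  qed simp
qed

lemma exp_neg_bound:
  assumes "D \<noteq> {}" and le: "\<And>t. t \<in> D \<Longrightarrow> m \<le> exp (- f t)"
  shows "m \<le> exp_neg (SUP t\<in>D. ereal (f t))"
proof (cases "m \<le> 0")
  case True
  then show ?thesis unfolding exp_neg_def by (auto intro: order_trans[OF True])
next
  case False
  define K where "K = - ln m"
  have mK: "exp (- K) = m" using False by (simp add: K_def)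
  have sup_le: "(SUP t\<in>D. ereal (f t)) \<le> ereal K"
  proof (rule SUP_least)
    fix t assume "t \<in> D"
    from le[OF this] have "exp (- K) \<le> exp (- f t)" using mK by simp
    thus "ereal (f t) \<le> ereal K" by simp
  qed
  obtain t0 where t0: "t0 \<in> D" using assms by auto
  have "ereal (f t0) \<le> (SUP t\<in>D. ereal (f t))" using t0 by (rule SUP_upper)
  then obtain r where r: "(SUP t\<in>D. ereal (f t)) = ereal r" "r \<le> K" using sup_le
    by (cases "(SUP t\<in>D. ereal (f t))") auto
  have "exp (- K) \<le> exp (- r)" using r(2) by simp
  then show ?thesis unfolding exp_neg_def using mK r(1) by simp
qed

lemma ennreal_aux:
  fixes e p q r w :: real
  assumes "0 \<le> e" "0 \<le> p" "0 \<le> q" "0 \<le> r" "0 \<le> w"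
  shows "ennreal (e * (p * q + r * w)) = ennreal e * (ennreal p * ennreal q + ennreal r * ennreal w)"
  using assms by (simp add: ennreal_mult ennreal_plus)

lemma pair_chernoff:
  assumes ps: "prob_space M" and yo: "young_orlicz phi l0"
    and X: "X \<in> borel_measurable M" and Y: "Y \<in> borel_measurable M"
    and nX: "bphi_norm M phi l0 X = ereal a" and a: "0 < a"
    and nY: "bphi_norm M phi l0 Y = ereal b" and b: "0 < b"
    and u: "0 < u" and t: "t \<in> yo_dom l0"
  shows "measure M {x\<in>space M. u < X x \<and> u < Y x} \<le> exp (- (t * (2 * u / (a + b)) - phi t))"
proof (cases "t < 0")
  case True
  interpret prob_space M by fact
  have "phi t \<ge> 0" using yo t unfolding young_orlicz_def by blast
  moreover have "t * (2 * u / (a + b)) \<le> 0" using True u a b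
    by (intro mult_nonpos_nonneg) auto
  ultimately have "1 \<le> exp (- (t * (2 * u / (a + b)) - phi t))" by simp
  moreover have "measure M {x\<in>space M. u < X x \<and> u < Y x} \<le> 1" by (rule prob_le_1)
  ultimately show ?thesis by linarith
next
  case False
  interpret prob_space M by fact
  define B where "B = a + b"
  have B: "0 < B" using a b by (simp add: B_def)
  define s where "s = t / B"
  have s0: "0 \<le> s" using False B by (simp add: s_def)
  have tl: "ereal \<bar>t\<bar> < l0" using t by (simp add: yo_dom_def)
  have iX: "(\<integral>\<^sup>+ x. ennreal (exp ((t / a) * X x)) \<partial>M) \<le> ennreal (exp (phi t))"
    using norm_bound[OF yo nX, of "t / a"] tl a by simp
  have iY: "(\<integral>\<^sup>+ x. ennreal (exp ((t / b) * Y x)) \<partial>M) \<le> ennreal (exp (phi t))"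
    using norm_bound[OF yo nY, of "t / b"] tl b by simp
  define E where "E = {x\<in>space M. u < X x \<and> u < Y x}"
  have Esets: "E \<in> sets M" unfolding E_def using X Y by measurable
  have pw: "indicator E x \<le> ennreal (exp (- (2 * u * s))) *
      (ennreal (a / B) * ennreal (exp ((t / a) * X x)) + ennreal (b / B) * ennreal (exp ((t / b) * Y x)))"
    if x: "x \<in> space M" for x
  proof (cases "x \<in> E")
    case True
    have cv: "exp ((1 - b / B) * ((t / a) * X x) + (b / B) * ((t / b) * Y x))
        \<le> (1 - b / B) * exp ((t / a) * X x) + (b / B) * exp ((t / b) * Y x)"
      using convex_onD[OF convex_on_exp[of 1], of "b / B" "(t / a) * X x" "(t / b) * Y x"] B a b
      by (simp add: B_def)
    have e1: "1 - b / B = a / B" using B by (simp add: B_def field_simps)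
    have e2: "(a / B) * ((t / a) * X x) + (b / B) * ((t / b) * Y x) = s * X x + s * Y x"
      using a b B by (simp add: s_def field_simps)
    have "u < X x" "u < Y x" using True unfolding E_def by auto
    hence "s * u \<le> s * X x" "s * u \<le> s * Y x" using s0 by (auto intro: mult_left_mono)
    hence "2 * u * s \<le> s * X x + s * Y x" by (simp add: algebra_simps)
    hence "1 \<le> exp (- (2 * u * s)) * exp (s * X x + s * Y x)"
      by (simp flip: exp_add)
    also have "\<dots> \<le> exp (- (2 * u * s)) * ((a / B) * exp ((t / a) * X x) + (b / B) * exp ((t / b) * Y x))"
      using cv e1 e2 by (intro mult_left_mono) auto
    finally have "1 \<le> exp (- (2 * u * s)) * ((a / B) * exp ((t / a) * X x) + (b / B) * exp ((t / b) * Y x))" .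
    hence "ennreal 1 \<le> ennreal (exp (- (2 * u * s)) * ((a / B) * exp ((t / a) * X x) + (b / B) * exp ((t / b) * Y x)))"
      by (rule ennreal_leI)
    also have "\<dots> = ennreal (exp (- (2 * u * s))) *
      (ennreal (a / B) * ennreal (exp ((t / a) * X x)) + ennreal (b / B) * ennreal (exp ((t / b) * Y x)))"
      using a b B by (intro ennreal_aux) auto
    finally show ?thesis using True by simp
  qed simp
  have "emeasure M E = (\<integral>\<^sup>+ x. indicator E x \<partial>M)" using Esets by simp
  also have "\<dots> \<le> (\<integral>\<^sup>+ x. ennreal (exp (- (2 * u * s))) *
      (ennreal (a / B) * ennreal (exp ((t / a) * X x)) + ennreal (b / B) * ennreal (exp ((t / b) * Y x))) \<partial>M)"
    by (rule nn_integral_mono) (rule pw)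
  also have "\<dots> = ennreal (exp (- (2 * u * s))) *
      (ennreal (a / B) * (\<integral>\<^sup>+ x. ennreal (exp ((t / a) * X x)) \<partial>M)
       + ennreal (b / B) * (\<integral>\<^sup>+ x. ennreal (exp ((t / b) * Y x)) \<partial>M))"
    using X Y by (simp add: nn_integral_cmult nn_integral_add)
  also have "\<dots> \<le> ennreal (exp (- (2 * u * s))) *
      (ennreal (a / B) * ennreal (exp (phi t)) + ennreal (b / B) * ennreal (exp (phi t)))"
    using iX iY by (intro mult_left_mono add_mono) auto
  also have "\<dots> = ennreal (exp (- (2 * u * s)) * ((a / B) * exp (phi t) + (b / B) * exp (phi t)))"
    using a b B by (intro ennreal_aux[symmetric]) auto
  also have "\<dots> = ennreal (exp (- (2 * u * s)) * ((a / B + b / B) * exp (phi t)))"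
    by (simp add: distrib_right)
  also have "\<dots> = ennreal (exp (- (t * (2 * u / (a + b)) - phi t)))"
  proof -
    have "a / B + b / B = 1" using B by (simp add: B_def add_divide_distrib[symmetric])
    moreover have "- (2 * u * s) + phi t = - (t * (2 * u / (a + b)) - phi t)"
      by (simp add: s_def B_def)
    ultimately show ?thesis by (simp flip: exp_add)
  qed
  finally show ?thesis unfolding E_def by (simp add: emeasure_eq_measure)
qed

lemma bonf_pointwise:
  fixes a :: "'b \<Rightarrow> real"
  assumes fin: "finite I" and a01: "\<And>i. i \<in> I \<Longrightarrow> a i = 0 \<or> a i = 1"
    and c: "c = (if (\<exists>i\<in>I. a i = 1) then 1 else 0)"
  shows "(\<Sum>i\<in>I. a i) - (\<Sum>i\<in>I. \<Sum>j\<in>I-{i}. a i * a j) \<le> c"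
proof -
  define S where "S = (\<Sum>i\<in>I. a i)"
  have "(\<Sum>i\<in>I. \<Sum>j\<in>I-{i}. a i * a j) = (\<Sum>i\<in>I. a i * (S - a i))"
    by (rule sum.cong) (auto simp: sum_distrib_left[symmetric] sum_diff1 fin S_def)
  also have "\<dots> = (\<Sum>i\<in>I. a i * S - a i)"
    by (rule sum.cong) (use a01 in \<open>auto simp: algebra_simps\<close>)
  also have "\<dots> = S * S - S" by (simp add: sum_subtractf sum_distrib_right[symmetric] S_def)
  finally have eq: "(\<Sum>i\<in>I. \<Sum>j\<in>I-{i}. a i * a j) = S * S - S" .
  show ?thesis
  proof (cases "\<exists>i\<in>I. a i = 1")
    case True
    hence "c = 1" using c by simp
    moreover have "S - (S * S - S) \<le> 1" 
    proof -
      have "0 \<le> (S - 1) * (S - 1)" by simp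
      thus ?thesis by (simp add: algebra_simps)
    qed
    ultimately show ?thesis using eq S_def by simp
  next
    case False
    hence "\<forall>i\<in>I. a i = 0" using a01 by blast
    hence "S = 0" by (simp add: S_def)
    thus ?thesis using eq False c S_def by simp
  qed
qed

lemma bonferroni:
  assumes ps: "prob_space M" and fin: "finite I" and A: "\<And>i. i \<in> I \<Longrightarrow> A i \<in> sets M"
  shows "(\<Sum>i\<in>I. measure M (A i)) - (\<Sum>i\<in>I. \<Sum>j\<in>I-{i}. measure M (A i \<inter> A j))
     \<le> measure M (\<Union>i\<in>I. A i)"
proof -
  interpret prob_space M by fact
  have m: "integral\<^sup>L M (indicator X) = measure M X" if "X \<in> sets M" for X
    using that sets.sets_into_space[OF that] by (simp add: Int_absorb2)
  have int: "integrable M (indicator X :: 'a \<Rightarrow> real)" if "X \<in> sets M" for X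
    using that by (intro integrable_real_indicator) (auto simp: emeasure_eq_measure)
  have Aij: "A i \<inter> A j \<in> sets M" if "i \<in> I" "j \<in> I" for i j using A that by auto
  have U: "(\<Union>i\<in>I. A i) \<in> sets M" using A fin by auto
  have "(\<Sum>i\<in>I. measure M (A i)) - (\<Sum>i\<in>I. \<Sum>j\<in>I-{i}. measure M (A i \<inter> A j))
     = (\<Sum>i\<in>I. integral\<^sup>L M (indicator (A i))) - (\<Sum>i\<in>I. \<Sum>j\<in>I-{i}. integral\<^sup>L M (indicator (A i \<inter> A j)))"
    using A Aij by (simp add: m)
  also have "\<dots> = integral\<^sup>L M (\<lambda>x. (\<Sum>i\<in>I. indicator (A i) x) - (\<Sum>i\<in>I. \<Sum>j\<in>I-{i}. indicator (A i \<inter> A j) x))"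
  proof -
    have i1: "integrable M (\<lambda>x. \<Sum>i\<in>I. indicator (A i) x :: real)"
      using A int by (intro Bochner_Integration.integrable_sum) auto
    have i2: "integrable M (\<lambda>x. \<Sum>i\<in>I. \<Sum>j\<in>I-{i}. indicator (A i \<inter> A j) x :: real)"
      using Aij int by (intro Bochner_Integration.integrable_sum) auto
    show ?thesis
      apply (subst Bochner_Integration.integral_diff[OF i1 i2])
      apply (subst Bochner_Integration.integral_sum, use A int in blast)
      apply (subst Bochner_Integration.integral_sum, use Aij int in \<open>intro Bochner_Integration.integrable_sum; auto\<close>)
      apply (rule arg_cong2[where f="(-)"], rule refl)
      apply (rule sum.cong, rule refl)
      apply (subst Bochner_Integration.integral_sum, use Aij int in auto)
      done
  qed
  also have "\<dots> \<le> integral\<^sup>L M (indicator (\<Union>i\<in>I. A i))"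
  proof (rule integral_mono)
    show "integrable M (\<lambda>x. (\<Sum>i\<in>I. indicator (A i) x) - (\<Sum>i\<in>I. \<Sum>j\<in>I-{i}. indicator (A i \<inter> A j) x) :: real)"
      using A Aij int by (intro Bochner_Integration.integrable_diff Bochner_Integration.integrable_sum) auto
    show "integrable M (indicator (\<Union>i\<in>I. A i) :: 'a \<Rightarrow> real)" using U by (rule int)
    fix x
    show "(\<Sum>i\<in>I. indicator (A i) x) - (\<Sum>i\<in>I. \<Sum>j\<in>I-{i}. indicator (A i \<inter> A j) x) \<le> (indicator (\<Union>i\<in>I. A i) x :: real)"
      unfolding indicator_inter_arith
    proof (rule bonf_pointwise[OF fin, of "\<lambda>i. indicator (A i) x" "indicator (\<Union>i\<in>I. A i) x"])
      show "\<And>i. i \<in> I \<Longrightarrow> indicator (A i) x = (0::real) \<or> indicator (A i) x = (1::real)"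
        by (simp add: indicator_def)
      show "indicator (\<Union>i\<in>I. A i) x = (if \<exists>i\<in>I. indicator (A i) x = (1::real) then 1 else (0::real))"
        by (simp add: indicator_def)
    qed
  qed
  also have "\<dots> = measure M (\<Union>i\<in>I. A i)" using U by (simp add: m)
  finally show ?thesis .
qed

theorem proposition4p1:
  fixes M :: "'a measure" and \<xi> :: "nat \<Rightarrow> 'a \<Rightarrow> real" and d :: nat
    and phi :: "real \<Rightarrow> real" and l0 :: ereal and \<beta> \<delta> :: "nat \<Rightarrow> real"
  assumes "prob_space M"
    and "d \<ge> 2"
    and rv: "\<forall>i\<in>{1..d}. \<xi> i \<in> borel_measurable M"
    and centered: "\<forall>i\<in>{1..d}. integrable M (\<xi> i) \<and> (\<integral>x. \<xi> i x \<partial>M) = 0"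
    and "young_orlicz phi l0"
    and beta: "\<forall>i\<in>{1..d}. bphi_norm M phi l0 (\<xi> i) = ereal (\<beta> i) \<and> 0 < \<beta> i"
    and delta: "\<forall>i\<in>{1..d}. 0 < \<delta> i \<and> \<delta> i \<le> \<beta> i"
    and lower: "\<forall>i\<in>{1..d}. \<forall>u::real. u \<ge> 1 \<longrightarrow>
        measure M {x\<in>space M. \<xi> i x > u} \<ge> exp_neg (young_fenchel phi l0 (u / \<delta> i))"
    and "u \<ge> 1"
  shows "measure M {x\<in>space M. (MAX i\<in>{1..d}. \<xi> i x) > u} \<ge>
           (\<Sum>i\<in>{1..d}. exp_neg (young_fenchel phi l0 (u / \<delta> i)))
         - (\<Sum>i\<in>{1..d}. \<Sum>j\<in>{1..d}-{i}.
              exp_neg (young_fenchel phi l0 (2 * u / (\<beta> i + \<beta> j))))"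
proof -
  interpret prob_space M by fact
  define I where "I = {1..d}"
  define A where "A i = {x\<in>space M. u < \<xi> i x}" for i
  have fin: "finite I" and Ine: "I \<noteq> {}" using assms(2) by (auto simp: I_def)
  have Asets: "A i \<in> sets M" if "i \<in> I" for i
  proof -
    have "\<xi> i \<in> borel_measurable M" using rv that unfolding I_def by blast
    thus ?thesis unfolding A_def by measurable
  qed
  have maxset: "{x\<in>space M. (MAX i\<in>I. \<xi> i x) > u} = (\<Union>i\<in>I. A i)"
  proof -
    have "u < (MAX i\<in>I. \<xi> i x) \<longleftrightarrow> (\<exists>i\<in>I. u < \<xi> i x)" for x
      using fin Ine by (subst Max_gr_iff) auto
    thus ?thesis by (auto simp: A_def)
  qed
  have u0: "0 < u" using assms(9) by simp
  have yo: "young_orlicz phi l0" by fact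
  have dne: "yo_dom l0 \<noteq> {}"
  proof -
    have "0 \<in> yo_dom l0" using yo unfolding young_orlicz_def yo_dom_def by (simp add: zero_ereal_def)
    thus ?thesis by blast
  qed
  have pairb: "measure M (A i \<inter> A j) \<le> exp_neg (young_fenchel phi l0 (2 * u / (\<beta> i + \<beta> j)))"
    if "i \<in> I" "j \<in> I" for i j
  proof -
    have "A i \<inter> A j = {x\<in>space M. u < \<xi> i x \<and> u < \<xi> j x}" by (auto simp: A_def)
    moreover have "measure M {x\<in>space M. u < \<xi> i x \<and> u < \<xi> j x}
        \<le> exp_neg (SUP t\<in>yo_dom l0. ereal (t * (2 * u / (\<beta> i + \<beta> j)) - phi t))"
    proof (rule exp_neg_bound[OF dne])
      fix t assume t: "t \<in> yo_dom l0"
      show "measure M {x\<in>space M. u < \<xi> i x \<and> u < \<xi> j x} \<le> exp (- (t * (2 * u / (\<beta> i + \<beta> j)) - phi t))"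
        using pair_chernoff[OF assms(1) yo, of "\<xi> i" "\<xi> j" "\<beta> i" "\<beta> j" u t] rv beta that t u0
        unfolding I_def by blast
    qed
    ultimately show ?thesis unfolding young_fenchel_def by simp
  qed
  have "(\<Sum>i\<in>I. exp_neg (young_fenchel phi l0 (u / \<delta> i)))
         - (\<Sum>i\<in>I. \<Sum>j\<in>I-{i}. exp_neg (young_fenchel phi l0 (2 * u / (\<beta> i + \<beta> j))))
      \<le> (\<Sum>i\<in>I. measure M (A i)) - (\<Sum>i\<in>I. \<Sum>j\<in>I-{i}. measure M (A i \<inter> A j))"
  proof (rule diff_mono)
    show "(\<Sum>i\<in>I. exp_neg (young_fenchel phi l0 (u / \<delta> i))) \<le> (\<Sum>i\<in>I. measure M (A i))"
      using lower assms(9) unfolding I_def A_def by (intro sum_mono) auto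
    show "(\<Sum>i\<in>I. \<Sum>j\<in>I-{i}. measure M (A i \<inter> A j))
       \<le> (\<Sum>i\<in>I. \<Sum>j\<in>I-{i}. exp_neg (young_fenchel phi l0 (2 * u / (\<beta> i + \<beta> j))))"
      using pairb by (intro sum_mono) auto
  qed
  also have "\<dots> \<le> measure M (\<Union>i\<in>I. A i)"
    by (rule bonferroni[OF assms(1) fin Asets])
  finally show ?thesis using maxset unfolding I_def by simp
qed

end
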